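(* Let $G$ be a finite EPO group. Then $\mathcal{S}(G)$ is cyclically separable if and only if either $pq$ divides $|G|$ for some primes $p > q \geq 5$, or at least two of the following three conditions hold: (i) $p$ divides $|G|$ for some prime $p \geq 5$; (ii) $3$ divides $|G|$ and $G$ has a Sylow $3$-subgroup which is not cyclic or is not normal in $G$; (iii) $2$ divides $|G|$ and $G$ has a Sylow $2$-subgroup which is not cyclic or is not normal in $G$.
   Context: A finite group is an EPO group if every non-identity element has prime order. All graphs are simple and undirected. For a finite group $G$, the order supergraph $\mathcal{S}(G)$ is the graph with vertex set $G$ in which two distinct vertices $x,y$ are adjacent if and only if the order of $x$ divides the order of $y$ or the order of $y$ divides the order of $x$. For a graph $\Gamma$, a vertex cutset is a set $S$ of vertices such that $\Gamma - S$ is disconnected; a cyclic vertex cutset is a vertex cutset $S$ such that $\Gamma - S$ has at least two connected components each of which contains a cycle. $\Gamma$ is called cyclically separable if it has a cyclic vertex cutset. *)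

theory Defs
  imports "HOL-Algebra.Algebra" "HOL-Computational_Algebra.Primes"
begin

definition EPO_group :: "('a, 'b) monoid_scheme \<Rightarrow> bool" where
  "EPO_group G \<longleftrightarrow> group G \<and>
     (\<forall>x \<in> carrier G. x \<noteq> \<one>\<^bsub>G\<^esub> \<longrightarrow> Factorial_Ring.prime (group.ord G x))"

definition sylow_subgroup :: "('a, 'b) monoid_scheme \<Rightarrow> nat \<Rightarrow> 'a set \<Rightarrow> bool" where
  "sylow_subgroup G p P \<longleftrightarrow> subgroup P G \<and> card P = p ^ multiplicity p (order G)"

section \<open>Simple graphs given by a vertex set and a symmetric irreflexive adjacency\<close>

definition graph_reach :: "'v set \<Rightarrow> ('v \<Rightarrow> 'v \<Rightarrow> bool) \<Rightarrow> 'v \<Rightarrow> 'v \<Rightarrow> bool" where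
  "graph_reach V E = (\<lambda>a b. a \<in> V \<and> b \<in> V \<and> E a b)\<^sup>*\<^sup>*"

definition graph_components :: "'v set \<Rightarrow> ('v \<Rightarrow> 'v \<Rightarrow> bool) \<Rightarrow> 'v set set" where
  "graph_components V E = {{y \<in> V. graph_reach V E x y} | x. x \<in> V}"

definition has_cycle :: "'v set \<Rightarrow> ('v \<Rightarrow> 'v \<Rightarrow> bool) \<Rightarrow> bool" where
  "has_cycle C E \<longleftrightarrow> (\<exists>xs. distinct xs \<and> length xs \<ge> 3 \<and> set xs \<subseteq> C \<and>
      (\<forall>i. Suc i < length xs \<longrightarrow> E (xs ! i) (xs ! Suc i)) \<and> E (last xs) (hd xs))"

definition vertex_cutset :: "'v set \<Rightarrow> ('v \<Rightarrow> 'v \<Rightarrow> bool) \<Rightarrow> 'v set \<Rightarrow> bool" where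
  "vertex_cutset V E S \<longleftrightarrow> S \<subseteq> V \<and> (\<exists>C1 C2. C1 \<in> graph_components (V - S) E \<and>
      C2 \<in> graph_components (V - S) E \<and> C1 \<noteq> C2)"

definition cyclic_vertex_cutset :: "'v set \<Rightarrow> ('v \<Rightarrow> 'v \<Rightarrow> bool) \<Rightarrow> 'v set \<Rightarrow> bool" where
  "cyclic_vertex_cutset V E S \<longleftrightarrow> vertex_cutset V E S \<and>
     (\<exists>C1 C2. C1 \<in> graph_components (V - S) E \<and> C2 \<in> graph_components (V - S) E \<and>
        C1 \<noteq> C2 \<and> has_cycle C1 E \<and> has_cycle C2 E)"

definition cyclically_separable :: "'v set \<Rightarrow> ('v \<Rightarrow> 'v \<Rightarrow> bool) \<Rightarrow> bool" where
  "cyclically_separable V E \<longleftrightarrow> (\<exists>S. cyclic_vertex_cutset V E S)"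

text \<open>Adjacency of the order supergraph S(G) (vertex set: carrier G).\<close>
definition order_supergraph_adj :: "('a, 'b) monoid_scheme \<Rightarrow> 'a \<Rightarrow> 'a \<Rightarrow> bool" where
  "order_supergraph_adj G x y \<longleftrightarrow> x \<noteq> y \<and>
     (group.ord G x dvd group.ord G y \<or> group.ord G y dvd group.ord G x)"

end

theory Submission
  imports Defs
begin


lemma reach_sym:
  assumes Es: "\<And>x y. E x y \<Longrightarrow> E y x" and r: "graph_reach V E a b"
  shows "graph_reach V E b a"
proof -
  have "symp (\<lambda>a b. a \<in> V \<and> b \<in> V \<and> E a b)" using Es by (auto simp: symp_def)
  hence "symp (graph_reach V E)" unfolding graph_reach_def by (rule symp_rtranclp)
  thus ?thesis using r by (meson sympD)
qed

lemma reach_trans: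
  "graph_reach V E a b \<Longrightarrow> graph_reach V E b c \<Longrightarrow> graph_reach V E a c"
  unfolding graph_reach_def by (rule rtranclp_trans)

lemma reach_step:
  "a \<in> V \<Longrightarrow> b \<in> V \<Longrightarrow> E a b \<Longrightarrow> graph_reach V E a b"
  unfolding graph_reach_def by (rule r_into_rtranclp) auto

lemma reach_refl: "graph_reach V E a a"
  unfolding graph_reach_def by simp

lemma comp_eq:
  assumes Es: "\<And>x y. E x y \<Longrightarrow> E y x"
    and C1: "C1 \<in> graph_components V E" and C2: "C2 \<in> graph_components V E"
    and a: "a \<in> C1" and b: "b \<in> C2" and r: "graph_reach V E a b"
  shows "C1 = C2"
proof -
  obtain x1 where x1: "x1 \<in> V" "C1 = {y \<in> V. graph_reach V E x1 y}"
    using C1 unfolding graph_components_def by blast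
  obtain x2 where x2: "x2 \<in> V" "C2 = {y \<in> V. graph_reach V E x2 y}"
    using C2 unfolding graph_components_def by blast
  have "graph_reach V E x1 a" using a x1(2) by simp
  hence r1: "graph_reach V E x1 b" using r by (rule reach_trans)
  have r2: "graph_reach V E x2 b" using b x2(2) by simp
  have r21: "graph_reach V E x2 x1" using r2 reach_sym[OF Es r1] by (rule reach_trans)
  have r12: "graph_reach V E x1 x2" using reach_sym[OF Es r21] .
  have "graph_reach V E x1 y \<longleftrightarrow> graph_reach V E x2 y" for y
    using reach_trans[OF r12, of y] reach_trans[OF r21, of y] by blast
  thus ?thesis using x1 x2 by auto
qed

lemma comp_sub: "C \<in> graph_components V E \<Longrightarrow> C \<subseteq> V"
  unfolding graph_components_def by auto

lemma three_elems:
  assumes "3 \<le> card A"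
  obtains a b c where "a \<in> A" "b \<in> A" "c \<in> A" "a \<noteq> b" "b \<noteq> c" "a \<noteq> c"
proof -
  obtain T where "T \<subseteq> A" "card T = 3" using obtain_subset_with_card_n[OF assms] by blast
  thus ?thesis using that card_3_iff[of T] by auto
qed

lemma graph_main:
  fixes V :: "'v set" and f :: "'v \<Rightarrow> nat" and e :: 'v
  assumes fin: "finite V" and eV: "e \<in> V" and fe: "f e = 1"
    and pr: "\<And>x. x \<in> V \<Longrightarrow> x \<noteq> e \<Longrightarrow> Factorial_Ring.prime (f x)"
    and E: "\<And>x y. E x y \<longleftrightarrow> x \<noteq> y \<and> (f x dvd f y \<or> f y dvd f x)"
  shows "cyclically_separable V E \<longleftrightarrow>
    (\<exists>p q. p \<noteq> q \<and> 3 \<le> card {x\<in>V. f x = p} \<and> 3 \<le> card {x\<in>V. f x = q})"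
proof
  have Es: "\<And>x y. E x y \<Longrightarrow> E y x" using E by blast
  have peq: "f x = f y" if "x \<in> V" "y \<in> V" "x \<noteq> e" "y \<noteq> e" "f x dvd f y \<or> f y dvd f x" for x y
    using that(5) primes_dvd_imp_eq[OF pr[OF that(1,3)] pr[OF that(2,4)]]
      primes_dvd_imp_eq[OF pr[OF that(2,4)] pr[OF that(1,3)]] by auto
  assume "cyclically_separable V E"
  then obtain S C1 C2 where S: "S \<subseteq> V" and C1: "C1 \<in> graph_components (V - S) E"
    and C2: "C2 \<in> graph_components (V - S) E" and ne: "C1 \<noteq> C2"
    and cy1: "has_cycle C1 E" and cy2: "has_cycle C2 E"
    unfolding cyclically_separable_def cyclic_vertex_cutset_def vertex_cutset_def by blast
  obtain xs1 where xs1: "distinct xs1" "length xs1 \<ge> 3" "set xs1 \<subseteq> C1"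
      "\<forall>i. Suc i < length xs1 \<longrightarrow> E (xs1 ! i) (xs1 ! Suc i)"
    using cy1 unfolding has_cycle_def by blast
  obtain xs2 where xs2: "distinct xs2" "length xs2 \<ge> 3" "set xs2 \<subseteq> C2"
      "\<forall>i. Suc i < length xs2 \<longrightarrow> E (xs2 ! i) (xs2 ! Suc i)"
    using cy2 unfolding has_cycle_def by blast
  define a where "a = hd xs1"
  define b where "b = hd xs2"
  have aC: "a \<in> C1" unfolding a_def using xs1 hd_in_set[of xs1] by fastforce
  have bC: "b \<in> C2" unfolding b_def using xs2 hd_in_set[of xs2] by fastforce
  have aV: "a \<in> V - S" using aC comp_sub[OF C1] by blast
  have bV: "b \<in> V - S" using bC comp_sub[OF C2] by blast
  have eS: "e \<in> S"
  proof (rule ccontr)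
    assume "e \<notin> S"
    hence eV': "e \<in> V - S" using eV by blast
    have re: "graph_reach (V - S) E e u" if "u \<in> V - S" for u
    proof (cases "u = e")
      case True thus ?thesis by (simp add: reach_refl)
    next
      case False thus ?thesis using that eV' by (intro reach_step) (auto simp: E fe)
    qed
    have "graph_reach (V - S) E a e" using reach_sym[OF Es re[OF aV]] .
    hence "graph_reach (V - S) E a b" using re[OF bV] by (rule reach_trans)
    thus False using comp_eq[OF Es C1 C2 aC bC] ne by blast
  qed
  have cyc: "\<forall>i < length xs. f (xs ! i) = f (hd xs)"
    if C: "C \<in> graph_components (V - S) E" and xs: "set xs \<subseteq> C" "length xs \<ge> 3"
      "\<forall>i. Suc i < length xs \<longrightarrow> E (xs ! i) (xs ! Suc i)" for C xs
  proof (intro allI impI)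
    fix i assume "i < length xs"
    thus "f (xs ! i) = f (hd xs)"
    proof (induction i)
      case 0 thus ?case using xs by (simp add: hd_conv_nth)
    next
      case (Suc i)
      have "xs ! i \<in> set xs" "xs ! Suc i \<in> set xs" using Suc.prems by auto
      hence in1: "xs ! i \<in> V - S" "xs ! Suc i \<in> V - S"
        using xs(1) comp_sub[OF C] by blast+
      have "f (xs ! Suc i) = f (xs ! i)"
        using peq[of "xs ! Suc i" "xs ! i"] in1 eS xs(3) Suc.prems E by auto
      thus ?case using Suc by simp
    qed
  qed
  have card3: "3 \<le> card {x\<in>V. f x = f (hd xs)}"
    if C: "C \<in> graph_components (V - S) E" and xs: "distinct xs" "set xs \<subseteq> C" "length xs \<ge> 3"
      "\<forall>i. Suc i < length xs \<longrightarrow> E (xs ! i) (xs ! Suc i)" for C xs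
  proof -
    have "set xs \<subseteq> {x\<in>V. f x = f (hd xs)}"
    proof
      fix x assume "x \<in> set xs"
      then obtain i where "i < length xs" "x = xs ! i" by (auto simp: in_set_conv_nth)
      thus "x \<in> {x\<in>V. f x = f (hd xs)}" using cyc[OF C xs(2,3,4)] xs(2) comp_sub[OF C]
        by (metis (mono_tags, lifting) DiffD1 \<open>x \<in> set xs\<close> mem_Collect_eq subset_iff)
    qed
    hence "card (set xs) \<le> card {x\<in>V. f x = f (hd xs)}" using fin by (intro card_mono) auto
    thus ?thesis using xs distinct_card by fastforce
  qed
  have "f a \<noteq> f b"
  proof
    assume fab: "f a = f b"
    have "graph_reach (V - S) E a b"
    proof (cases "a = b")
      case True thus ?thesis by (simp add: reach_refl)
    next
      case False thus ?thesis using aV bV fab by (intro reach_step) (auto simp: E)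
    qed
    thus False using comp_eq[OF Es C1 C2 aC bC] ne by blast
  qed
  thus "\<exists>p q. p \<noteq> q \<and> 3 \<le> card {x\<in>V. f x = p} \<and> 3 \<le> card {x\<in>V. f x = q}"
    using card3[OF C1 xs1(1,3,2,4)] card3[OF C2 xs2(1,3,2,4)] unfolding a_def b_def by blast
next
  assume "\<exists>p q. p \<noteq> q \<and> 3 \<le> card {x\<in>V. f x = p} \<and> 3 \<le> card {x\<in>V. f x = q}"
  then obtain p q where pq: "p \<noteq> q" and cp: "3 \<le> card {x\<in>V. f x = p}"
    and cq: "3 \<le> card {x\<in>V. f x = q}" by blast
  obtain a1 a2 a3 where a: "a1 \<in> {x\<in>V. f x = p}" "a2 \<in> {x\<in>V. f x = p}" "a3 \<in> {x\<in>V. f x = p}"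
      "a1 \<noteq> a2" "a2 \<noteq> a3" "a1 \<noteq> a3" using three_elems[OF cp] by blast
  obtain b1 b2 b3 where b: "b1 \<in> {x\<in>V. f x = q}" "b2 \<in> {x\<in>V. f x = q}" "b3 \<in> {x\<in>V. f x = q}"
      "b1 \<noteq> b2" "b2 \<noteq> b3" "b1 \<noteq> b3" using three_elems[OF cq] by blast
  have isE: "x = e" if "x \<in> V" "f x = 1" for x
    using pr[OF that(1)] that(2) by fastforce
  have p1: "p \<noteq> 1"
  proof
    assume "p = 1"
    hence "a1 = e" "a2 = e" using a isE by auto
    thus False using a by simp
  qed
  have q1: "q \<noteq> 1"
  proof
    assume "q = 1"
    hence "b1 = e" "b2 = e" using b isE by auto
    thus False using b by simp
  qed
  let ?V = "V - {e}"
  have inV: "x \<in> ?V" if "x \<in> V" "f x = r" "r \<noteq> 1" for x r using that fe by auto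
  have keep: "f y = f x" if "graph_reach ?V E x y" "x \<in> ?V" for x y
    using that(1) unfolding graph_reach_def
  proof (induction rule: rtranclp_induct)
    case base thus ?case by simp
  next
    case (step y z)
    have yz: "y \<in> ?V" "z \<in> ?V" "E y z" using step(2) by auto
    have "f y dvd f z \<or> f z dvd f y" using yz(3) E by blast
    hence "f z = f y" using primes_dvd_imp_eq[OF pr[of y] pr[of z]] primes_dvd_imp_eq[OF pr[of z] pr[of y]] yz
      by auto
    thus ?case using step by simp
  qed
  define C1 where "C1 = {y \<in> ?V. graph_reach ?V E a1 y}"
  define C2 where "C2 = {y \<in> ?V. graph_reach ?V E b1 y}"
  have a1V: "a1 \<in> ?V" using a(1) p1 inV by blast
  have b1V: "b1 \<in> ?V" using b(1) q1 inV by blast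
  have C1c: "C1 \<in> graph_components ?V E" unfolding C1_def graph_components_def using a1V by blast
  have C2c: "C2 \<in> graph_components ?V E" unfolding C2_def graph_components_def using b1V by blast
  have "b1 \<in> C2" unfolding C2_def using b1V reach_refl by fast
  moreover have "b1 \<notin> C1" unfolding C1_def using keep[OF _ a1V, of b1] a b pq by auto
  ultimately have ne: "C1 \<noteq> C2" by blast
  have inC: "x \<in> C1" if "x \<in> {x\<in>V. f x = p}" for x
  proof (cases "x = a1")
    case True thus ?thesis unfolding C1_def using a1V reach_refl by fast
  next
    case False
    have "x \<in> ?V" using that p1 inV by blast
    thus ?thesis unfolding C1_def using a1V False that a(1) by (auto intro!: reach_step simp: E)
  qed
  have inC2: "x \<in> C2" if "x \<in> {x\<in>V. f x = q}" for x
  proof (cases "x = b1")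
    case True thus ?thesis unfolding C2_def using b1V reach_refl by fast
  next
    case False
    have "x \<in> ?V" using that q1 inV by blast
    thus ?thesis unfolding C2_def using b1V False that b(1) by (auto intro!: reach_step simp: E)
  qed
  have cyc3: "has_cycle C E" if "x1 \<in> C" "x2 \<in> C" "x3 \<in> C" "E x1 x2" "E x2 x3" "E x3 x1"
      "x1 \<noteq> x2" "x2 \<noteq> x3" "x1 \<noteq> x3" for C x1 x2 x3
  proof -
    have st: "\<forall>i. Suc i < length [x1,x2,x3] \<longrightarrow> E ([x1,x2,x3] ! i) ([x1,x2,x3] ! Suc i)"
    proof (intro allI impI)
      fix i assume "Suc i < length [x1,x2,x3]"
      hence "i = 0 \<or> i = 1" by (simp add: less_Suc_eq)
      thus "E ([x1,x2,x3] ! i) ([x1,x2,x3] ! Suc i)" using that by auto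
    qed
    show ?thesis unfolding has_cycle_def
      by (rule exI[of _ "[x1, x2, x3]"]) (use that st in simp)
  qed
  have Eeq: "E x y" if "x \<noteq> y" "f x = f y" for x y using that E by simp
  have fa: "f a1 = p" "f a2 = p" "f a3 = p" using a(1-3) by auto
  have fb: "f b1 = q" "f b2 = q" "f b3 = q" using b(1-3) by auto
  have h1: "has_cycle C1 E"
  proof (rule cyc3[OF inC[OF a(1)] inC[OF a(2)] inC[OF a(3)] _ _ _ a(4,5,6)])
    show "E a1 a2" by (rule Eeq[OF a(4)]) (simp add: fa)
    show "E a2 a3" by (rule Eeq[OF a(5)]) (simp add: fa)
    show "E a3 a1" by (rule Eeq) (use a(6) fa in auto)
  qed
  have h2: "has_cycle C2 E"
  proof (rule cyc3[OF inC2[OF b(1)] inC2[OF b(2)] inC2[OF b(3)] _ _ _ b(4,5,6)])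
    show "E b1 b2" by (rule Eeq[OF b(4)]) (simp add: fb)
    show "E b2 b3" by (rule Eeq[OF b(5)]) (simp add: fb)
    show "E b3 b1" by (rule Eeq) (use b(6) fb in auto)
  qed
  have vc: "vertex_cutset V E {e}" unfolding vertex_cutset_def
    using eV C1c C2c ne by (intro conjI exI[of _ C1] exI[of _ C2]) auto
  have "cyclic_vertex_cutset V E {e}" unfolding cyclic_vertex_cutset_def
    using vc C1c C2c ne h1 h2 by (intro conjI exI[of _ C1] exI[of _ C2])
  thus "cyclically_separable V E" unfolding cyclically_separable_def by (rule exI)
qed



locale epo = group G for G (structure) +
  assumes fin: "finite (carrier G)"
  and epo: "\<And>x. x \<in> carrier G \<Longrightarrow> x \<noteq> \<one> \<Longrightarrow> Factorial_Ring.prime (ord x)"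
begin

definition Op :: "nat \<Rightarrow> 'a set" where "Op p = {x \<in> carrier G. ord x = p}"

lemma finOp: "finite (Op p)" unfolding Op_def using fin by simp

lemma order_pos: "order G > 0"
  unfolding order_def using fin one_closed card_gt_0_iff by blast

lemma sylow_sub: "sylow_subgroup G p P \<Longrightarrow> subgroup P G"
  by (simp add: sylow_subgroup_def)

lemma sylow_elem_ord:
  assumes p: "Factorial_Ring.prime p" and P: "sylow_subgroup G p P" and x: "x \<in> P" "x \<noteq> \<one>"
  shows "ord x = p"
proof -
  have sg: "subgroup P G" using P by (rule sylow_sub)
  have xc: "x \<in> carrier G" using sg x subgroup.subset by blast
  interpret H: group "G\<lparr>carrier := P\<rparr>" using subgroup_imp_group[OF sg] .
  have "x [^]\<^bsub>G\<lparr>carrier := P\<rparr>\<^esub> order (G\<lparr>carrier := P\<rparr>) = \<one>\<^bsub>G\<lparr>carrier := P\<rparr>\<^esub>"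
    using H.pow_order_eq_1 x by simp
  hence "x [^] card P = \<one>" by (simp add: order_def nat_pow_consistent[symmetric])
  hence "ord x dvd p ^ multiplicity p (order G)" using P pow_eq_id[OF xc] by (simp add: sylow_subgroup_def)
  hence "ord x dvd p" using prime_dvd_power epo[OF xc x(2)] by blast
  thus ?thesis using primes_dvd_imp_eq epo[OF xc x(2)] p by blast
qed

lemma sylow_exists:
  assumes "Factorial_Ring.prime p" shows "\<exists>P. sylow_subgroup G p P"
proof -
  define a where "a = multiplicity p (order G)"
  define m where "m = order G div p^a"
  have "p^a dvd order G" unfolding a_def by (rule multiplicity_dvd)
  hence "order G = p^a * m" unfolding m_def by simp
  hence "sylow G p a m" using assms by (simp add: sylow_eq sylow_axioms_def fin is_group)
  from sylow.sylow_thm[OF this] show ?thesis unfolding sylow_subgroup_def a_def by blast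
qed

lemma sylow_card:
  assumes p: "Factorial_Ring.prime p" and P: "sylow_subgroup G p P" and d: "p dvd order G"
  shows "\<exists>a. a \<ge> 1 \<and> card P = p ^ a"
proof -
  have "0 < multiplicity p (order G)"
    using multiplicity_gt_zero_iff[of "order G" p] order_pos d p not_prime_unit by auto
  thus ?thesis using P unfolding sylow_subgroup_def
    by (intro exI[of _ "multiplicity p (order G)"]) auto
qed

lemma cauchy:
  assumes p: "Factorial_Ring.prime p" and d: "p dvd order G"
  shows "\<exists>x \<in> carrier G. ord x = p"
proof -
  obtain P where P: "sylow_subgroup G p P" using sylow_exists[OF p] by blast
  obtain a where a: "a \<ge> 1" "card P = p ^ a" using sylow_card[OF p P d] by blast
  have "p \<ge> 2" using p prime_ge_2_nat by blast
  hence "p ^ 1 \<le> p ^ a" using a(1) by (intro power_increasing) auto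
  hence c2: "card P \<ge> 2" using a \<open>p \<ge> 2\<close> by simp
  have "\<exists>x \<in> P. x \<noteq> \<one>"
  proof (rule ccontr)
    assume "\<not> ?thesis"
    hence "P \<subseteq> {\<one>}" by blast
    hence "card P \<le> 1" using card_mono[of "{\<one>}" P] by simp
    thus False using c2 by simp
  qed
  then obtain x where "x \<in> P" "x \<noteq> \<one>" by blast
  moreover have "x \<in> carrier G" using \<open>x \<in> P\<close> sylow_sub[OF P] subgroup.subset by blast
  ultimately show ?thesis using sylow_elem_ord[OF p P] by blast
qed

lemma Op_dvd:
  assumes "3 \<le> card (Op p)" shows "Factorial_Ring.prime p \<and> p dvd order G"
proof -
  obtain x y where "x \<in> Op p" "y \<in> Op p" "x \<noteq> y"
    using three_elems[OF assms] by metis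
  hence "x \<noteq> \<one> \<or> y \<noteq> \<one>" by blast
  then obtain z where z: "z \<in> Op p" "z \<noteq> \<one>" using \<open>x \<in> Op p\<close> \<open>y \<in> Op p\<close> by blast
  hence "z \<in> carrier G" "ord z = p" unfolding Op_def by auto
  thus ?thesis using epo z(2) ord_dvd_group_order by auto
qed

lemma Op_ge5:
  assumes p: "Factorial_Ring.prime p" and p5: "p \<ge> 5" and d: "p dvd order G"
  shows "3 \<le> card (Op p)"
proof -
  obtain x where x: "x \<in> carrier G" "ord x = p" using cauchy[OF p d] by blast
  have ordk: "ord (x [^] k) = p" if "k \<in> {1,2,3::nat}" for k
  proof -
    have "\<not> p dvd k" using that p5 by (auto dest: dvd_imp_le)
    hence "gcd p k = 1" using prime_imp_coprime[OF p] by (simp add: coprime_iff_gcd_eq_1)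
    thus ?thesis using ord_pow_gen[OF x(1), of k] x(2) that by auto
  qed
  have inj: "inj_on (\<lambda>k. x [^] k) {1,2,3::nat}"
  proof (rule inj_on_subset[OF ord_inj[OF x(1)]])
    show "{1,2,3::nat} \<subseteq> {0..ord x - 1}" using x(2) p5 by auto
  qed
  have "(\<lambda>k. x [^] k) ` {1,2,3::nat} \<subseteq> Op p" unfolding Op_def using ordk x by auto
  hence "card ((\<lambda>k. x [^] k) ` {1,2,3::nat}) \<le> card (Op p)" using finOp by (intro card_mono)
  thus ?thesis using card_image[OF inj] by simp
qed

lemma lcanc: "g \<in> carrier G \<Longrightarrow> u \<in> carrier G \<Longrightarrow> inv g \<otimes> (g \<otimes> u) = u"
  by (simp add: m_assoc[symmetric])

lemma lcancel: "c \<in> carrier G \<Longrightarrow> a \<in> carrier G \<Longrightarrow> b \<in> carrier G \<Longrightarrow> c \<otimes> a = c \<otimes> b \<Longrightarrow> a = b"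
  by (metis lcanc)

lemma conj_pow:
  assumes g: "g \<in> carrier G" and h: "h \<in> carrier G"
  shows "(g \<otimes> h \<otimes> inv g) [^] (n::nat) = g \<otimes> h [^] n \<otimes> inv g"
proof (induction n)
  case 0 thus ?case using g by simp
next
  case (Suc n)
  have "(g \<otimes> h \<otimes> inv g) [^] Suc n = (g \<otimes> h [^] n \<otimes> inv g) \<otimes> (g \<otimes> h \<otimes> inv g)"
    using Suc by simp
  also have "\<dots> = g \<otimes> (h [^] n \<otimes> (inv g \<otimes> (g \<otimes> (h \<otimes> inv g))))"
    using g h by (simp add: m_assoc)
  also have "\<dots> = g \<otimes> (h [^] n \<otimes> (h \<otimes> inv g))" using g h by (simp add: lcanc)
  also have "\<dots> = g \<otimes> h [^] Suc n \<otimes> inv g" using g h by (simp add: m_assoc)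
  finally show ?case .
qed

lemma conj_one:
  "g \<in> carrier G \<Longrightarrow> y \<in> carrier G \<Longrightarrow> g \<otimes> y \<otimes> inv g = \<one> \<longleftrightarrow> y = \<one>"
  by (metis group.l_cancel_one' group.r_cancel_one' inv_solve_right is_group m_closed one_closed)

lemma conj_ord:
  assumes g: "g \<in> carrier G" and h: "h \<in> carrier G"
  shows "ord (g \<otimes> h \<otimes> inv g) = ord h"
proof -
  have c: "g \<otimes> h \<otimes> inv g \<in> carrier G" using g h by simp
  show ?thesis
    unfolding ord_unique[OF c]
    using conj_pow[OF g h] conj_one[OF g] pow_eq_id[OF h] h by simp
qed

lemma conj_Op: "g \<in> carrier G \<Longrightarrow> h \<in> Op p \<Longrightarrow> g \<otimes> h \<otimes> inv g \<in> Op p"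
  unfolding Op_def using conj_ord by auto

lemma ord2_iff:
  assumes w: "w \<in> carrier G"
  shows "ord w = 2 \<longleftrightarrow> w \<noteq> \<one> \<and> w \<otimes> w = \<one>"
proof
  assume o: "ord w = 2"
  have "w [^] (2::nat) = \<one>" using pow_ord_eq_1[OF w] o by simp
  hence "w \<otimes> w = \<one>" using w by (simp add: numeral_2_eq_2)
  moreover have "w \<noteq> \<one>" using o ord_eq_1[OF w] by auto
  ultimately show "w \<noteq> \<one> \<and> w \<otimes> w = \<one>" by blast
next
  assume a: "w \<noteq> \<one> \<and> w \<otimes> w = \<one>"
  hence "w [^] (2::nat) = \<one>" using w by (simp add: numeral_2_eq_2)
  hence d: "ord w dvd 2" using pow_eq_id[OF w] by blast
  have "ord w \<noteq> 1" using a ord_eq_1[OF w] by blast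
  moreover have "ord w \<noteq> 0" using d by (metis dvd_0_left_iff zero_neq_numeral)
  moreover have "ord w \<le> 2" using d by (simp add: dvd_imp_le)
  ultimately show "ord w = 2" by linarith
qed

lemma third_inv:
  assumes y: "y \<in> Op 2" and z: "z \<in> Op 2" and yz: "y \<noteq> z"
  shows "\<exists>w \<in> Op 2. w \<noteq> y \<and> w \<noteq> z"
proof -
  have yc: "y \<in> carrier G" and zc: "z \<in> carrier G" using y z unfolding Op_def by auto
  have y2: "y \<noteq> \<one>" "y \<otimes> y = \<one>" using y ord2_iff[OF yc] unfolding Op_def by auto
  have z2: "z \<noteq> \<one>" "z \<otimes> z = \<one>" using z ord2_iff[OF zc] unfolding Op_def by auto
  show ?thesis
  proof (cases "z \<otimes> y \<otimes> z = y")
    case True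
    define w where "w = y \<otimes> z"
    have wc: "w \<in> carrier G" unfolding w_def using yc zc by simp
    have ww: "w \<otimes> w = \<one>" unfolding w_def using yc zc y2 z2 True
      by (metis l_one m_assoc m_closed)
    have w1: "w \<noteq> \<one>"
    proof
      assume "w = \<one>"
      hence "y \<otimes> z = y \<otimes> y" using y2 unfolding w_def by simp
      hence "z = y" using lcancel[OF yc zc yc] by blast
      thus False using yz by simp
    qed
    have wy: "w \<noteq> y" unfolding w_def using z2(1) yc zc by simp
    have wz: "w \<noteq> z" unfolding w_def using y2(1) yc zc by simp
    show ?thesis using wc ww w1 wy wz ord2_iff[OF wc] unfolding Op_def by auto
  next
    case False
    define w where "w = z \<otimes> y \<otimes> z"
    have wc: "w \<in> carrier G" unfolding w_def using yc zc by simp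
    have ww: "w \<otimes> w = \<one>" unfolding w_def using yc zc y2 z2
      by (metis l_cancel_one m_assoc m_closed)
    have w1: "w \<noteq> \<one>"
    proof
      assume "w = \<one>"
      hence "(z \<otimes> y) \<otimes> z = z \<otimes> z" using zc z2 unfolding w_def by simp
      hence "z \<otimes> y = z" using right_cancel[OF zc _ zc] yc zc by simp
      hence "y = \<one>" using yc zc by simp
      thus False using y2 by simp
    qed
    have wz: "w \<noteq> z"
    proof
      assume "w = z"
      hence "(z \<otimes> y) \<otimes> z = \<one> \<otimes> z" using zc unfolding w_def by simp
      hence "z \<otimes> y = \<one>" using right_cancel[OF zc _ one_closed] yc zc by simp
      hence "z \<otimes> y = z \<otimes> z" using z2 by simp
      hence "y = z" using lcancel[OF zc yc zc] by blast
      thus False using yz by simp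
    qed
    show ?thesis using wc ww w1 False wz ord2_iff[OF wc] unfolding Op_def w_def by auto
  qed
qed

lemma Op2_card:
  assumes "2 \<le> card (Op 2)" shows "3 \<le> card (Op 2)"
proof -
  obtain T where T: "T \<subseteq> Op 2" "card T = 2" using obtain_subset_with_card_n[OF assms] by blast
  have "\<exists>y z. T = {y, z} \<and> y \<noteq> z" using T(2) by (simp only: card_2_iff)
  then obtain y z where yz: "T = {y, z}" "y \<noteq> z" by blast
  have "y \<in> Op 2" "z \<in> Op 2" using T(1) yz(1) by auto
  then obtain w where w: "w \<in> Op 2" "w \<noteq> y" "w \<noteq> z" using third_inv[OF _ _ yz(2)] by blast
  have "{y, z, w} \<subseteq> Op 2" using T yz w by auto
  hence "card {y, z, w} \<le> card (Op 2)" using finOp by (intro card_mono)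
  moreover have "card {y, z, w} = 3" using yz(2) w(2,3) by simp
  ultimately show ?thesis by simp
qed

lemma sub_nat_pow: "subgroup P G \<Longrightarrow> h \<in> P \<Longrightarrow> h [^] (n::nat) \<in> P"
  using subgroup_int_pow_closed[of P h "int n"] by (simp add: int_pow_int)

lemma one_notin_Op: "Factorial_Ring.prime p \<Longrightarrow> \<one> \<notin> Op p"
  unfolding Op_def by auto

lemma small_imp_cyc_normal:
  assumes p: "Factorial_Ring.prime p" and d: "p dvd order G" and c: "card (Op p) \<le> p - 1"
    and P: "sylow_subgroup G p P"
  shows "cyclic_group (G\<lparr>carrier := P\<rparr>) \<and> P \<lhd> G"
proof -
  have sg: "subgroup P G" using sylow_sub[OF P] .
  have Pc: "P \<subseteq> carrier G" using sg subgroup.subset by blast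
  have sub: "P \<subseteq> insert \<one> (Op p)"
  proof
    fix x assume x: "x \<in> P"
    show "x \<in> insert \<one> (Op p)"
    proof (cases "x = \<one>")
      case False thus ?thesis using sylow_elem_ord[OF p P x False] x Pc unfolding Op_def by auto
    qed simp
  qed
  have p2: "p \<ge> 2" using p prime_ge_2_nat by blast
  have finI: "finite (insert \<one> (Op p))" using finOp by simp
  have cI: "card (insert \<one> (Op p)) \<le> p"
    using c one_notin_Op[OF p] finOp p2 by (simp add: card_insert_disjoint)
  obtain a where a: "a \<ge> 1" "card P = p ^ a" using sylow_card[OF p P d] by blast
  have "card P \<le> p" using card_mono[OF finI sub] cI by simp
  hence "p ^ a \<le> p ^ 1" using a by simp
  hence "a \<le> 1" using power_le_imp_le_exp[of p a 1] p2 by simp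
  hence "a = 1" using a(1) by linarith
  hence cP: "card P = p" using a(2) by simp
  have eqP: "P = insert \<one> (Op p)"
    using card_subset_eq[OF finI sub] cP cI card_mono[OF finI sub] by simp
  have nor: "P \<lhd> G"
    unfolding normal_inv_iff
  proof (intro conjI sg ballI)
    fix g h assume g: "g \<in> carrier G" and h: "h \<in> P"
    show "g \<otimes> h \<otimes> inv g \<in> P"
    proof (cases "h = \<one>")
      case True thus ?thesis using g eqP by simp
    next
      case False
      hence "h \<in> Op p" using h eqP by simp
      thus ?thesis using conj_Op[OF g] eqP by blast
    qed
  qed
  have "\<exists>x \<in> P. x \<noteq> \<one>"
  proof (rule ccontr)
    assume "\<not> ?thesis"
    hence "P \<subseteq> {\<one>}" by blast
    hence "card P \<le> 1" using card_mono[of "{\<one>}" P] by simp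
    thus False using cP p2 by simp
  qed
  then obtain x where x: "x \<in> P" "x \<noteq> \<one>" by blast
  have xc: "x \<in> carrier G" using x Pc by blast
  have ox: "ord x = p" using sylow_elem_ord[OF p P x] .
  have finP: "finite P" using finI eqP by simp
  have gs: "generate G {x} \<subseteq> P" using generate_subgroup_incl[OF _ sg] x by simp
  have "card (generate G {x}) = p" using generate_pow_card[OF xc] ox by simp
  hence gP: "generate G {x} = P" using card_subset_eq[OF finP gs] cP by simp
  interpret H: group "G\<lparr>carrier := P\<rparr>" using subgroup_imp_group[OF sg] .
  have "carrier (G\<lparr>carrier := P\<rparr>) = range (\<lambda>n::int. x [^]\<^bsub>G\<lparr>carrier := P\<rparr>\<^esub> n)"
  proof -
    have r: "(\<lambda>n::int. x [^]\<^bsub>G\<lparr>carrier := P\<rparr>\<^esub> n) = (\<lambda>n. x [^] n)"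
      using int_pow_consistent[OF sg x(1)] by auto
    have "generate G {x} = range (\<lambda>n::int. x [^] n)" using generate_pow[OF xc] by auto
    thus ?thesis using gP r by simp
  qed
  hence "cyclic_group (G\<lparr>carrier := P\<rparr>)" using H.cyclic_group x(1) by auto
  thus ?thesis using nor by blast
qed

lemma normal_contains:
  assumes p: "Factorial_Ring.prime p" and N: "P \<lhd> G" and cP: "card P = p"
    and nd: "\<not> p * p dvd order G" and y: "y \<in> carrier G" "ord y = p"
  shows "y \<in> P"
proof -
  interpret N: normal P G using N .
  have sg: "subgroup P G" using N by (simp add: normal_def)
  interpret F: group "G Mod P" using N.factorgroup_is_group .
  define m where "m = card (rcosets P)"
  have mo: "m * p = order G" unfolding m_def using lagrange[OF sg] cP by simp
  have npm: "\<not> p dvd m"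
  proof
    assume "p dvd m"
    hence "p * p dvd m * p" by simp
    thus False using nd mo by simp
  qed
  have m0: "m \<noteq> 0" using mo order_pos by (metis mult_zero_left less_irrefl)
  have oF: "order (G Mod P) = m" unfolding order_def m_def FactGroup_def by simp
  have "P #> y \<in> carrier (G Mod P)" unfolding FactGroup_def using rcosetsI[OF N.subset y(1)] by simp
  hence "(P #> y) [^]\<^bsub>G Mod P\<^esub> m = \<one>\<^bsub>G Mod P\<^esub>" using F.pow_order_eq_1 oF by metis
  hence "P #> (y [^] m) = P" using N.FactGroup_pow[OF y(1), of m] by simp
  hence ym: "y [^] m \<in> P" using coset_join1[of P "y [^] m"] sg y by simp
  obtain u v where uv: "m * u = p * v + gcd m p" using bezout_nat[OF m0] by blast
  have "coprime p m" using prime_imp_coprime[OF p npm] .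
  hence "gcd m p = 1" by (simp add: coprime_iff_gcd_eq_1 gcd.commute)
  hence uv1: "m * u = p * v + 1" using uv by simp
  have "y [^] (m * u) = (y [^] p) [^] v \<otimes> y" using y(1) uv1 by (simp add: nat_pow_mult nat_pow_pow)
  also have "\<dots> = y" using y pow_ord_eq_1[OF y(1)] by simp
  finally have yy: "y = (y [^] m) [^] u" using y(1) by (simp add: nat_pow_pow)
  have "(y [^] m) [^] u \<in> P" by (rule sub_nat_pow[OF sg ym])
  thus ?thesis using yy by metis
qed

lemma cyc_normal_imp_small:
  assumes p: "Factorial_Ring.prime p" and d: "p dvd order G" and P: "sylow_subgroup G p P"
    and cyc: "cyclic_group (G\<lparr>carrier := P\<rparr>)" and N: "P \<lhd> G"
  shows "card (Op p) \<le> p - 1"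
proof -
  have sg: "subgroup P G" using sylow_sub[OF P] .
  have Pc: "P \<subseteq> carrier G" using sg subgroup.subset by blast
  interpret H: group "G\<lparr>carrier := P\<rparr>" using subgroup_imp_group[OF sg] .
  obtain x where x: "x \<in> P" "P = range (\<lambda>n::int. x [^]\<^bsub>G\<lparr>carrier := P\<rparr>\<^esub> n)"
    using H.cyclic_group cyc by auto
  have xc: "x \<in> carrier G" using x Pc by blast
  have r: "(\<lambda>n::int. x [^]\<^bsub>G\<lparr>carrier := P\<rparr>\<^esub> n) = (\<lambda>n. x [^] n)"
    using int_pow_consistent[OF sg x(1)] by auto
  have "generate G {x} = range (\<lambda>n::int. x [^] n)" using generate_pow[OF xc] by auto
  hence "P = generate G {x}" using x(2) r by simp
  hence cPx: "card P = ord x" using generate_pow_card[OF xc] by simp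
  obtain a where a: "a \<ge> 1" "card P = p ^ a" using sylow_card[OF p P d] by blast
  have p2: "p \<ge> 2" using p prime_ge_2_nat by blast
  have "p ^ 1 \<le> p ^ a" using a(1) p2 by (intro power_increasing) auto
  hence "card P \<ge> 2" using a p2 by simp
  hence "x \<noteq> \<one>" using cPx by auto
  hence ox: "ord x = p" using sylow_elem_ord[OF p P x(1)] by simp
  hence cP: "card P = p" using cPx by simp
  have m1: "multiplicity p (order G) = 1"
  proof -
    have "p ^ multiplicity p (order G) = p ^ 1" using P cP unfolding sylow_subgroup_def by simp
    thus ?thesis by (subst (asm) power_inject_exp) (use p2 in auto)
  qed
  have nd: "\<not> p * p dvd order G"
  proof
    assume "p * p dvd order G"
    hence "p ^ 2 dvd order G" by (simp add: power2_eq_square)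
    hence "2 \<le> multiplicity p (order G)"
      using multiplicity_geI[of "order G" p 2] order_pos p not_prime_unit by auto
    thus False using m1 by simp
  qed
  have sub: "Op p \<subseteq> P - {\<one>}"
    using normal_contains[OF p N cP nd] one_notin_Op[OF p] unfolding Op_def by auto
  have finP: "finite P" using fin Pc finite_subset by blast
  have "card (Op p) \<le> card (P - {\<one>})" using card_mono[OF _ sub] finP by simp
  moreover have "\<one> \<in> P" using sg by (rule subgroup.one_closed)
  ultimately show ?thesis using cP by (simp add: card_Diff_singleton_if)
qed

lemma char23:
  assumes p23: "p = 2 \<or> p = 3"
  shows "3 \<le> card (Op p) \<longleftrightarrow> p dvd order G \<and> (\<exists>P. sylow_subgroup G p P \<and>
           (\<not> cyclic_group (G\<lparr>carrier := P\<rparr>) \<or> \<not> P \<lhd> G))"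
proof
  have "Factorial_Ring.prime (3::nat)"
  proof -
    have "{2..<3::nat} = {2}" by auto
    thus ?thesis unfolding prime_nat_iff' by simp
  qed
  hence p: "Factorial_Ring.prime p" using p23 by auto
  {
    assume c3: "3 \<le> card (Op p)"
    hence d: "p dvd order G" using Op_dvd by blast
    obtain P where P: "sylow_subgroup G p P" using sylow_exists[OF p] by blast
    have "\<not> cyclic_group (G\<lparr>carrier := P\<rparr>) \<or> \<not> P \<lhd> G"
      using cyc_normal_imp_small[OF p d P] c3 p23 by auto
    thus "p dvd order G \<and> (\<exists>P. sylow_subgroup G p P \<and>
           (\<not> cyclic_group (G\<lparr>carrier := P\<rparr>) \<or> \<not> P \<lhd> G))" using d P by blast
  }
  assume "p dvd order G \<and> (\<exists>P. sylow_subgroup G p P \<and>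
           (\<not> cyclic_group (G\<lparr>carrier := P\<rparr>) \<or> \<not> P \<lhd> G))"
  then obtain P where d: "p dvd order G" and P: "sylow_subgroup G p P"
    and bad: "\<not> cyclic_group (G\<lparr>carrier := P\<rparr>) \<or> \<not> P \<lhd> G" by blast
  show "3 \<le> card (Op p)"
  proof (rule ccontr)
    assume "\<not> 3 \<le> card (Op p)"
    hence lt: "card (Op p) < 3" by simp
    have "card (Op p) \<le> p - 1"
    proof (cases "p = 2")
      case True
      hence "\<not> 2 \<le> card (Op p)" using Op2_card lt by auto
      thus ?thesis using True by simp
    next
      case False thus ?thesis using p23 lt by auto
    qed
    thus False using small_imp_cyc_normal[OF p d _ P] bad by blast
  qed
qed

end

theorem mainTheorem4:
  fixes G :: "('a, 'b) monoid_scheme"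
  assumes "group G" and "finite (carrier G)" and "EPO_group G"
  shows "cyclically_separable (carrier G) (order_supergraph_adj G) \<longleftrightarrow>
    ((\<exists>p q. Factorial_Ring.prime p \<and> Factorial_Ring.prime (q::nat) \<and> p > q \<and> q \<ge> 5 \<and> p * q dvd order G) \<or>
     (let c1 = (\<exists>p::nat. Factorial_Ring.prime p \<and> p \<ge> 5 \<and> p dvd order G);
          c2 = (3 dvd order G \<and> (\<exists>P. sylow_subgroup G 3 P \<and>
                  (\<not> cyclic_group (G\<lparr>carrier := P\<rparr>) \<or> \<not> P \<lhd> G)));
          c3 = (2 dvd order G \<and> (\<exists>P. sylow_subgroup G 2 P \<and>
                  (\<not> cyclic_group (G\<lparr>carrier := P\<rparr>) \<or> \<not> P \<lhd> G)))
      in (c1 \<and> c2) \<or> (c1 \<and> c3) \<or> (c2 \<and> c3)))"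
proof -
  interpret E: epo G
    by (intro epo.intro epo_axioms.intro) (use assms in \<open>auto simp: EPO_group_def\<close>)
  define B where "B = (\<lambda>p. 3 \<le> card (E.Op p))"
  have gr: "cyclically_separable (carrier G) (order_supergraph_adj G) \<longleftrightarrow>
      (\<exists>p q. p \<noteq> q \<and> B p \<and> B q)"
    unfolding B_def E.Op_def
    by (rule graph_main[where f = "group.ord G" and e = "\<one>\<^bsub>G\<^esub>"])
       (use E.fin E.epo in \<open>auto simp: order_supergraph_adj_def\<close>)
  have F5: "B p \<longleftrightarrow> p dvd order G" if "Factorial_Ring.prime p" "p \<ge> 5" for p
    unfolding B_def using E.Op_dvd E.Op_ge5 that by blast
  have FP: "Factorial_Ring.prime p \<and> p dvd order G" if "B p" for p
    using E.Op_dvd that unfolding B_def by blast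
  have F2: "B 2 \<longleftrightarrow> (2 dvd order G \<and> (\<exists>P. sylow_subgroup G 2 P \<and>
                  (\<not> cyclic_group (G\<lparr>carrier := P\<rparr>) \<or> \<not> P \<lhd> G)))"
    unfolding B_def by (rule E.char23) simp
  have F3: "B 3 \<longleftrightarrow> (3 dvd order G \<and> (\<exists>P. sylow_subgroup G 3 P \<and>
                  (\<not> cyclic_group (G\<lparr>carrier := P\<rparr>) \<or> \<not> P \<lhd> G)))"
    unfolding B_def by (rule E.char23) simp
  have tri: "p = 2 \<or> p = 3 \<or> p \<ge> 5" if "Factorial_Ring.prime (p::nat)" for p
  proof -
    have "p \<ge> 2" using that prime_ge_2_nat by blast
    moreover have "p \<noteq> 4"
    proof
      assume "p = 4"
      hence "(2::nat) dvd p" by simp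
      moreover have "Factorial_Ring.prime (2::nat)" by simp
      ultimately have "2 = p" using that primes_dvd_imp_eq by blast
      thus False using \<open>p = 4\<close> by simp
    qed
    ultimately show ?thesis by linarith
  qed
  have pq: "p * q dvd order G \<longleftrightarrow> p dvd order G \<and> q dvd order G"
    if "Factorial_Ring.prime p" "Factorial_Ring.prime q" "p \<noteq> q" for p q :: nat
  proof
    assume "p * q dvd order G" thus "p dvd order G \<and> q dvd order G"
      using dvd_mult_left dvd_mult_right by blast
  next
    assume "p dvd order G \<and> q dvd order G"
    thus "p * q dvd order G" using divides_mult primes_coprime[OF that] by blast
  qed
  have C1: "(\<exists>p::nat. Factorial_Ring.prime p \<and> p \<ge> 5 \<and> p dvd order G) \<longleftrightarrow>
            (\<exists>p. Factorial_Ring.prime p \<and> p \<ge> 5 \<and> B p)" using F5 by blast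
  have C0: "(\<exists>p q. Factorial_Ring.prime p \<and> Factorial_Ring.prime (q::nat) \<and> p > q \<and> q \<ge> 5 \<and> p * q dvd order G)
      \<longleftrightarrow> (\<exists>p q. Factorial_Ring.prime p \<and> Factorial_Ring.prime (q::nat) \<and> p > q \<and> q \<ge> 5 \<and> B p \<and> B q)"
  proof
    assume "\<exists>p q. Factorial_Ring.prime p \<and> Factorial_Ring.prime (q::nat) \<and> p > q \<and> q \<ge> 5 \<and> p * q dvd order G"
    then obtain p q where h: "Factorial_Ring.prime p" "Factorial_Ring.prime (q::nat)" "p > q" "q \<ge> 5" "p * q dvd order G" by blast
    have "B p" "B q" using pq[OF h(1,2)] h F5[OF h(1)] F5[OF h(2)] by auto
    thus "\<exists>p q. Factorial_Ring.prime p \<and> Factorial_Ring.prime (q::nat) \<and> p > q \<and> q \<ge> 5 \<and> B p \<and> B q"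
      using h by blast
  next
    assume "\<exists>p q. Factorial_Ring.prime p \<and> Factorial_Ring.prime (q::nat) \<and> p > q \<and> q \<ge> 5 \<and> B p \<and> B q"
    then obtain p q where h: "Factorial_Ring.prime p" "Factorial_Ring.prime (q::nat)" "p > q" "q \<ge> 5" "B p" "B q" by blast
    have "p * q dvd order G" using pq[OF h(1,2)] h FP by auto
    thus "\<exists>p q. Factorial_Ring.prime p \<and> Factorial_Ring.prime (q::nat) \<and> p > q \<and> q \<ge> 5 \<and> p * q dvd order G"
      using h by blast
  qed
  have main: "(\<exists>p q. p \<noteq> q \<and> B p \<and> B q) \<longleftrightarrow>
     ((\<exists>p q. Factorial_Ring.prime p \<and> Factorial_Ring.prime (q::nat) \<and> p > q \<and> q \<ge> 5 \<and> B p \<and> B q) \<or>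
      ((\<exists>p. Factorial_Ring.prime p \<and> p \<ge> 5 \<and> B p) \<and> B 3) \<or>
      ((\<exists>p. Factorial_Ring.prime p \<and> p \<ge> 5 \<and> B p) \<and> B 2) \<or> (B 3 \<and> B 2))"
  proof
    assume "\<exists>p q. p \<noteq> q \<and> B p \<and> B q"
    then obtain p q where h: "p \<noteq> q" "B p" "B q" by blast
    have pp: "Factorial_Ring.prime p" "Factorial_Ring.prime q" using FP h by auto
    consider "p \<ge> 5" "q \<ge> 5" | "p = 2 \<or> p = 3" | "q = 2 \<or> q = 3" using tri[OF pp(1)] tri[OF pp(2)] by blast
    thus "((\<exists>p q. Factorial_Ring.prime p \<and> Factorial_Ring.prime (q::nat) \<and> p > q \<and> q \<ge> 5 \<and> B p \<and> B q) \<or>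
      ((\<exists>p. Factorial_Ring.prime p \<and> p \<ge> 5 \<and> B p) \<and> B 3) \<or>
      ((\<exists>p. Factorial_Ring.prime p \<and> p \<ge> 5 \<and> B p) \<and> B 2) \<or> (B 3 \<and> B 2))"
    proof cases
      case 1
      show ?thesis
      proof (cases "p > q")
        case True thus ?thesis using 1 h pp by blast
      next
        case False hence "q > p" using h(1) by simp
        thus ?thesis using 1 h pp by blast
      qed
    next
      case 2
      thus ?thesis using h pp tri[OF pp(2)] by auto
    next
      case 3
      thus ?thesis using h pp tri[OF pp(1)] by auto
    qed
  next
    assume "((\<exists>p q. Factorial_Ring.prime p \<and> Factorial_Ring.prime (q::nat) \<and> p > q \<and> q \<ge> 5 \<and> B p \<and> B q) \<or>
      ((\<exists>p. Factorial_Ring.prime p \<and> p \<ge> 5 \<and> B p) \<and> B 3) \<or>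
      ((\<exists>p. Factorial_Ring.prime p \<and> p \<ge> 5 \<and> B p) \<and> B 2) \<or> (B 3 \<and> B 2))"
    thus "\<exists>p q. p \<noteq> q \<and> B p \<and> B q"
    proof (elim disjE conjE exE)
      fix p q assume h: "p > q" "B p" "B q"
      hence "p \<noteq> q" by simp
      thus ?thesis using h by blast
    next
      fix p assume h: "p \<ge> 5" "B p" "B 3"
      hence "p \<noteq> 3" by simp
      thus ?thesis using h by blast
    next
      fix p assume h: "p \<ge> 5" "B p" "B 2"
      hence "p \<noteq> 2" by simp
      thus ?thesis using h by blast
    next
      assume h: "B 3" "B 2"
      have "(3::nat) \<noteq> 2" by simp
      thus ?thesis using h by blast
    qed
  qed
  show ?thesis unfolding gr main Let_def C0[symmetric] F2[symmetric] F3[symmetric] C1 by blast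
qed

end
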